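(* Let $m\geq 3$. Let $\pi\in S(\mathbb{Z}_m)$ and $\pi_x\in S(\mathbb{Z}_2)$ for each $x\in\mathbb{Z}_m$, and define $\sigma\in S(\mathbb{Z}_m\times\mathbb{Z}_2)$ by $\sigma(x,y)=(\pi(x),\pi_x(y))$. Let $c\in S(\mathbb{Z}_m\times\mathbb{Z}_2)$ be given by $c(x,y)=(x+1,y)$ if $x\neq m-1$ and $c(x,y)=(x+1,y+1)$ if $x=m-1$. Then there is an integer $k$ such that $\sigma c^k$ has at least $4$ cycles; equivalently, $\min_k t(\sigma c^k)\leq 2m-4$, where $t(\tau)=2m-\mathrm{cyc}(\tau)$.
   Context: $S(X)$ denotes the set of bijections of a finite set $X$; $\mathrm{cyc}(\tau)$ is the number of cycles (including fixed points) of $\tau$. Under the bijection $\mathbb{Z}_{2m}\to\mathbb{Z}_m\times\mathbb{Z}_2$, $r+mt\mapsto(r,t)$ ($0\le r<m$, $t\in\{0,1\}$), $c$ corresponds to $z\mapsto z+1$, so $\{\sigma c^k\}$ corresponds to the circular class $[\sigma]$ and the claim says $t([\sigma])\leq 2m-4$. *)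

theory Defs
  imports Main
begin

definition ZmZ2 :: "nat \<Rightarrow> (nat \<times> nat) set" where
  "ZmZ2 m = {0..<m} \<times> {0..<2}"

definition cycle_of :: "('a \<Rightarrow> 'a) \<Rightarrow> 'a \<Rightarrow> 'a set" where
  "cycle_of f x = {(f ^^ n) x | n. True}"

definition cyc :: "'a set \<Rightarrow> ('a \<Rightarrow> 'a) \<Rightarrow> nat" where
  "cyc X f = card (cycle_of f ` X)"

definition sigma_of :: "(nat \<Rightarrow> nat) \<Rightarrow> (nat \<Rightarrow> nat \<Rightarrow> nat) \<Rightarrow> nat \<times> nat \<Rightarrow> nat \<times> nat" where
  "sigma_of p ps = (\<lambda>(x, y). (p x, ps x y))"

text \<open>c(x,y) = (x+1,y) if x \<noteq> m-1, and (x+1,y+1) = (0, y+1 mod 2) if x = m-1.\<close>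
definition c_map :: "nat \<Rightarrow> nat \<times> nat \<Rightarrow> nat \<times> nat" where
  "c_map m = (\<lambda>(x, y). if x = m - 1 then (0, (y + 1) mod 2) else (x + 1, y))"

end

theory Submission
  imports Defs "HOL-Combinatorics.Orbits"
begin


lemma cycle_of_orbit:
  assumes "p permutes X" "finite X"
  shows "cycle_of p x = orbit p x"
proof -
  have "permutation p" using assms permutation_permutes by blast
  then show ?thesis by (simp add: orbit_altdef_permutation cycle_of_def)
qed

lemma orbit_same:
  assumes "permutation p" "y \<in> orbit p x"
  shows "orbit p y = orbit p x"
  using assms cyclic_on_orbit' orbit_cyclic_eq3 by metis

lemma orbit_surgery:
  assumes pX: "p permutes X" and fin: "finite X" and aX: "a \<in> X" and pa: "p a \<noteq> a"
  defines "q \<equiv> transpose a (p a) \<circ> p"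
  shows "orbit q ` X = (orbit p ` X - {orbit p a}) \<union> {{a}, orbit p a - {a}}"
    and "{a} \<notin> orbit p ` X - {orbit p a}"
    and "orbit p a - {a} \<notin> orbit p ` X - {orbit p a}"
    and "{a} \<noteq> orbit p a - {a}"
proof -
  have perm: "permutation p" using pX fin permutation_permutes by blast
  have qX: "q permutes X" unfolding q_def
    by (rule permutes_compose[OF pX permutes_swap_id[OF aX]]) (simp add: permutes_in_image[OF pX] aX)
  have permq: "permutation q" using qX fin permutation_permutes by blast
  have self: "\<And>x. x \<in> orbit p x" using perm permutation_self_in_orbit by metis
  have selfq: "\<And>x. x \<in> orbit q x" using permq permutation_self_in_orbit by metis
  have injp: "\<And>x y. p x = p y \<Longrightarrow> x = y" using pX permutes_inj injD by metis
  have qa: "q a = a" by (simp add: q_def)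
  have qgen: "\<And>s. s \<noteq> a \<Longrightarrow> p s \<noteq> a \<Longrightarrow> q s = p s"
    unfolding q_def using injp by (auto simp: transpose_def)
  have qpre: "\<And>s. p s = a \<Longrightarrow> q s = p a"
    unfolding q_def by (auto simp: transpose_def)
  have paO: "p a \<in> orbit p a" by (rule orbit.base)
  have C1: "orbit q x = orbit p x" if "a \<notin> orbit p x" for x
  proof (rule orbit_cong[OF self])
    fix s assume s: "s \<in> orbit p x"
    then have "p s \<in> orbit p x" by (rule orbit.step)
    then have "p s \<noteq> a" using that by auto
    moreover have "s \<noteq> a" using s that by auto
    ultimately show "q s = p s" using qgen by auto
  qed
  have C2: "orbit q a = {a}" using qa orbit_eq_singleton_iff by metis
  have C3: "orbit q x = orbit p a - {a}" if x: "x \<in> orbit p a" "x \<noteq> a" for x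
  proof
    show "orbit q x \<subseteq> orbit p a - {a}"
    proof
      fix y assume "y \<in> orbit q x"
      then show "y \<in> orbit p a - {a}"
      proof induct
        case base
        show ?case
        proof (cases "p x = a")
          case True then show ?thesis using qpre paO pa by auto
        next
          case False
          have "q x = p x" using qgen x False by auto
          moreover have "p x \<in> orbit p a" using x(1) by (rule orbit.step)
          ultimately show ?thesis using False by auto
        qed
      next
        case (step y)
        show ?case
        proof (cases "p y = a")
          case True then show ?thesis using qpre paO pa by auto
        next
          case False
          have ya: "y \<in> orbit p a" "y \<noteq> a" using step by auto
          have "q y = p y" using qgen ya(2) False by auto
          moreover have "p y \<in> orbit p a" using ya(1) by (rule orbit.step)
          ultimately show ?thesis using False by auto
        qed
      qed
    qed
  next
    have claim: "((p ^^ n) x \<noteq> a \<longrightarrow> (p ^^ n) x \<in> orbit q x) \<and> ((p ^^ n) x = a \<longrightarrow> p a \<in> orbit q x)" for n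
    proof (induction n)
      case 0 then show ?case using x selfq by auto
    next
      case (Suc n)
      define u where "u = (p ^^ n) x"
      have su: "(p ^^ Suc n) x = p u" by (simp add: u_def)
      show ?case
      proof (cases "u = a")
        case True then show ?thesis using Suc.IH su pa u_def by auto
      next
        case False
        then have uO: "u \<in> orbit q x" using Suc.IH u_def by auto
        show ?thesis
        proof (cases "p u = a")
          case True
          then have "q u = p a" using qpre by auto
          then have "p a \<in> orbit q x" using uO orbit.step by metis
          then show ?thesis using su True by auto
        next
          case False2: False
          then have "q u = p u" using qgen False by auto
          then have "p u \<in> orbit q x" using uO orbit.step by metis
          then show ?thesis using su False2 by auto
        qed
      qed
    qed
    show "orbit p a - {a} \<subseteq> orbit q x"
    proof
      fix y assume y: "y \<in> orbit p a - {a}"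
      have "orbit p x = orbit p a" using orbit_same[OF perm x(1)] .
      then have "y \<in> orbit p x" using y by auto
      then obtain n where "y = (p ^^ n) x" using orbit_altdef_permutation[OF perm] by blast
      then show "y \<in> orbit q x" using claim[of n] y by auto
    qed
  qed
  have paX: "p a \<in> X" using pX aX permutes_in_image by metis
  have pa_in: "p a \<in> orbit p a - {a}" using paO pa by auto
  show "orbit q ` X = (orbit p ` X - {orbit p a}) \<union> {{a}, orbit p a - {a}}"
  proof
    show "orbit q ` X \<subseteq> (orbit p ` X - {orbit p a}) \<union> {{a}, orbit p a - {a}}"
    proof
      fix Yo assume "Yo \<in> orbit q ` X"
      then obtain x where xX: "x \<in> X" and Oh: "Yo = orbit q x" by auto
      show "Yo \<in> (orbit p ` X - {orbit p a}) \<union> {{a}, orbit p a - {a}}"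
      proof (cases "a \<in> orbit p x")
        case True
        then have "x \<in> orbit p a" using orbit_same[OF perm True] self by metis
        then show ?thesis using C2 C3 Oh by (cases "x = a") auto
      next
        case False
        then have "orbit p x \<noteq> orbit p a" using self by metis
        then show ?thesis using C1[OF False] Oh xX by auto
      qed
    qed
  next
    show "(orbit p ` X - {orbit p a}) \<union> {{a}, orbit p a - {a}} \<subseteq> orbit q ` X"
    proof
      fix Yo assume Oh: "Yo \<in> (orbit p ` X - {orbit p a}) \<union> {{a}, orbit p a - {a}}"
      show "Yo \<in> orbit q ` X"
      proof (cases "Yo = {a}")
        case True then show ?thesis using C2 aX by (metis image_eqI)
      next
        case False
        show ?thesis
        proof (cases "Yo = orbit p a - {a}")
          case True then show ?thesis using C3[OF paO pa] paX by (metis image_eqI)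
        next
          case False2: False
          then obtain x where xX: "x \<in> X" and Ox: "Yo = orbit p x" and ne: "orbit p x \<noteq> orbit p a"
            using Oh False by auto
          have "a \<notin> orbit p x"
          proof
            assume "a \<in> orbit p x"
            then have "orbit p a = orbit p x" using orbit_same[OF perm] by metis
            then show False using ne by simp
          qed
          then show ?thesis using C1 Ox xX by (metis image_eqI)
        qed
      qed
    qed
  qed
  show "{a} \<notin> orbit p ` X - {orbit p a}"
  proof
    assume "{a} \<in> orbit p ` X - {orbit p a}"
    then obtain x where x1: "{a} = orbit p x" and x2: "orbit p x \<noteq> orbit p a" by auto
    have "x \<in> {a}" using self[of x] x1 by simp
    then have "x = a" by simp
    then show False using x2 by simp
  qed
  show "orbit p a - {a} \<notin> orbit p ` X - {orbit p a}"
  proof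
    assume "orbit p a - {a} \<in> orbit p ` X - {orbit p a}"
    then obtain x where e: "orbit p a - {a} = orbit p x" "orbit p x \<noteq> orbit p a" by auto
    then have "x \<in> orbit p a" using self[of x] by auto
    then show False using orbit_same[OF perm] e by metis
  qed
  show "{a} \<noteq> orbit p a - {a}" using pa_in by auto
qed


lemma cyc_le_card: "finite X \<Longrightarrow> cyc X f \<le> card X"
  unfolding cyc_def by (rule card_image_le)

lemma cyc_parity:
  assumes "p permutes X" "finite X"
  shows "evenperm p \<longleftrightarrow> even (card X - cyc X p)"
  using assms
proof (induction "card {x. p x \<noteq> x}" arbitrary: p rule: less_induct)
  case less
  have cyc_eq: "\<And>q. q permutes X \<Longrightarrow> cyc X q = card (orbit q ` X)"
    unfolding cyc_def using cycle_of_orbit[OF _ less.prems(2)] by (metis image_cong)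
  show ?case
  proof (cases "\<exists>a. p a \<noteq> a")
    case False
    then have pid: "p = id" by auto
    have "orbit p ` X = (\<lambda>x. {x}) ` X" using pid orbit_eq_singleton_iff by (metis id_apply image_cong)
    then have "card (orbit p ` X) = card X" by (simp add: card_image)
    then show ?thesis using cyc_eq[OF less.prems(1)] pid by simp
  next
    case True
    then obtain a where pa: "p a \<noteq> a" by blast
    have aX: "a \<in> X" using pa less.prems(1) permutes_not_in by metis
    have paX: "p a \<in> X" using aX less.prems(1) permutes_in_image by metis
    define q where "q = transpose a (p a) \<circ> p"
    have qX: "q permutes X" unfolding q_def
      by (rule permutes_compose[OF less.prems(1) permutes_swap_id[OF aX paX]])
    have injp: "\<And>x y. p x = p y \<Longrightarrow> x = y" using less.prems(1) permutes_inj injD by metis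
    have sub: "{x. q x \<noteq> x} \<subseteq> {x. p x \<noteq> x} - {a}"
    proof
      fix x assume "x \<in> {x. q x \<noteq> x}"
      then have qx: "q x \<noteq> x" by simp
      have "x \<noteq> a" using qx by (auto simp: q_def transpose_def split: if_splits)
      moreover have "p x \<noteq> x"
      proof
        assume px: "p x = x"
        then have "x \<noteq> p a" using pa injp by metis
        then show False using qx px \<open>x \<noteq> a\<close> by (simp add: q_def transpose_def)
      qed
      ultimately show "x \<in> {x. p x \<noteq> x} - {a}" by simp
    qed
    have finp: "finite {x. p x \<noteq> x}"
      using less.prems permutes_not_in by (metis (mono_tags, lifting) mem_Collect_eq rev_finite_subset subsetI)
    have lt: "card {x. q x \<noteq> x} < card {x. p x \<noteq> x}"
    proof -
      have "card {x. q x \<noteq> x} \<le> card ({x. p x \<noteq> x} - {a})"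
        using sub finp by (simp add: card_mono)
      also have "\<dots> < card {x. p x \<noteq> x}" using finp pa by (intro card_Diff1_less) auto
      finally show ?thesis .
    qed
    have IH: "evenperm q \<longleftrightarrow> even (card X - cyc X q)"
      using less.hyps[OF lt qX less.prems(2)] .
    note S = orbit_surgery[OF less.prems(1) less.prems(2) aX pa]
    have finB: "finite (orbit p ` X)" using less.prems(2) by simp
    have oa: "orbit p a \<in> orbit p ` X" using aX by simp
    have "card (orbit q ` X) = card (orbit p ` X - {orbit p a}) + 2"
      unfolding q_def S(1) using S(2,3,4) finB
      by (subst card_Un_disjoint) (auto simp: card_insert_if)
    also have "\<dots> = card (orbit p ` X) + 1"
      using oa finB card_Diff1_less[OF finB oa] by (simp add: card_Diff_singleton)
    finally have cq: "cyc X q = cyc X p + 1"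
      using cyc_eq[OF qX] cyc_eq[OF less.prems(1)] by simp
    have le: "cyc X q \<le> card X" using cyc_le_card[OF less.prems(2)] .
    have permp: "permutation p" using less.prems permutation_permutes by blast
    have e1: "evenperm (transpose a (p a) \<circ> p) = (evenperm (transpose a (p a)) = evenperm p)"
      by (rule evenperm_comp[OF permutation_swap_id permp])
    have e2: "\<not> evenperm (transpose a (p a))" using pa by (simp add: evenperm_swap)
    have "evenperm q \<longleftrightarrow> \<not> evenperm p"
      unfolding q_def using e1 e2 by blast
    then show ?thesis using IH cq le by auto
  qed
qed



definition enc :: "nat \<Rightarrow> nat \<times> nat \<Rightarrow> nat" where
  "enc m z = fst z + m * snd z"

lemma mem_X: "z \<in> ZmZ2 m \<longleftrightarrow> fst z < m \<and> snd z < 2"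
  by (cases z) (auto simp: ZmZ2_def)

lemma enc_lt: "z \<in> ZmZ2 m \<Longrightarrow> enc m z < 2 * m"
proof -
  assume "z \<in> ZmZ2 m"
  then have "fst z < m" "snd z < 2" by (auto simp: mem_X)
  then have "snd z = 0 \<or> snd z = 1" by auto
  then show ?thesis using \<open>fst z < m\<close> by (auto simp: enc_def)
qed

lemma enc_inj: "z \<in> ZmZ2 m \<Longrightarrow> w \<in> ZmZ2 m \<Longrightarrow> enc m z = enc m w \<Longrightarrow> z = w"
proof -
  assume z: "z \<in> ZmZ2 m" and w: "w \<in> ZmZ2 m" and e: "enc m z = enc m w"
  have a: "fst z < m" "snd z < 2" "fst w < m" "snd w < 2" using z w by (auto simp: mem_X)
  have "enc m z mod m = fst z" "enc m z div m = snd z" using a by (auto simp: enc_def)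
  moreover have "enc m w mod m = fst w" "enc m w div m = snd w" using a by (auto simp: enc_def)
  ultimately have "fst z = fst w" "snd z = snd w" using e by metis+
  then show "z = w" by (simp add: prod_eq_iff)
qed

lemma mod_cases2: "(e::nat) < N \<Longrightarrow> j \<le> N \<Longrightarrow> (e + j) mod N = (if e + j < N then e + j else e + j - N)"
proof -
  assume "e < N" "j \<le> N"
  then have "e + j < 2 * N" by simp
  then show ?thesis
    by (simp add: le_mod_geq)
qed

lemma c_X: "m \<ge> 1 \<Longrightarrow> z \<in> ZmZ2 m \<Longrightarrow> c_map m z \<in> ZmZ2 m"
  by (cases z) (auto simp: c_map_def mem_X)

lemma c_enc: "m \<ge> 1 \<Longrightarrow> z \<in> ZmZ2 m \<Longrightarrow> enc m (c_map m z) = (enc m z + 1) mod (2 * m)"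
proof -
  assume m: "m \<ge> 1" and z: "z \<in> ZmZ2 m"
  obtain x y where xy: "z = (x, y)" by (cases z)
  have a: "x < m" "y < 2" using z xy by (auto simp: mem_X)
  show ?thesis
  proof (cases "x = m - 1")
    case True
    then have "enc m (c_map m z) = m * ((y + 1) mod 2)" by (simp add: xy c_map_def enc_def)
    moreover have "enc m z + 1 = m * (y + 1)" using True m by (simp add: xy enc_def)
    moreover have "m * ((y + 1) mod 2) = (m * (y + 1)) mod (2 * m)"
    proof -
      have "y = 0 \<or> y = 1" using a(2) by auto
      then show ?thesis using m by (elim disjE) (simp_all add: mult_2)
    qed
    ultimately show ?thesis by simp
  next
    case False
    then have "enc m (c_map m z) = x + 1 + m * y" by (simp add: xy c_map_def enc_def)
    moreover have "x + 1 + m * y < 2 * m"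
    proof -
      have "y = 0 \<or> y = 1" using a(2) by auto
      then show ?thesis using a(1) False by (elim disjE) auto
    qed
    ultimately show ?thesis by (simp add: xy enc_def)
  qed
qed

lemma cpow: "m \<ge> 1 \<Longrightarrow> z \<in> ZmZ2 m \<Longrightarrow> (c_map m ^^ k) z \<in> ZmZ2 m \<and> enc m ((c_map m ^^ k) z) = (enc m z + k) mod (2 * m)"
proof (induction k)
  case 0 then show ?case using enc_lt by simp
next
  case (Suc k)
  then have h: "(c_map m ^^ k) z \<in> ZmZ2 m" "enc m ((c_map m ^^ k) z) = (enc m z + k) mod (2 * m)" by auto
  have "enc m ((c_map m ^^ Suc k) z) = ((enc m z + k) mod (2 * m) + 1) mod (2 * m)"
    using c_enc[OF Suc.prems(1) h(1)] h(2) by simp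
  also have "\<dots> = (enc m z + Suc k) mod (2 * m)" by (simp add: mod_Suc_eq)
  finally show ?case using c_X[OF Suc.prems(1) h(1)] by simp
qed

lemma cpow_m: "m \<ge> 1 \<Longrightarrow> z \<in> ZmZ2 m \<Longrightarrow> (c_map m ^^ m) z = (fst z, 1 - snd z)"
proof -
  assume m: "m \<ge> 1" and z: "z \<in> ZmZ2 m"
  have a: "fst z < m" "snd z < 2" using z by (auto simp: mem_X)
  have w: "(fst z, 1 - snd z) \<in> ZmZ2 m" using a by (auto simp: mem_X)
  have "enc m (fst z, 1 - snd z) = (enc m z + m) mod (2 * m)"
  proof -
    have "snd z = 0 \<or> snd z = 1" using a(2) by auto
    then show ?thesis using a(1) by (elim disjE) (simp_all add: enc_def mult_2 add.assoc)
  qed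
  then show ?thesis using enc_inj[OF _ w] cpow[OF m z, of m] by metis
qed

lemma mod2m: "((x::nat) mod (2 * m)) mod 2 = x mod 2"
  by (simp add: mod_mod_cancel)

lemma restr_permutes:
  assumes "finite X" "f ` X \<subseteq> X" "inj_on f X"
  shows "perm_restrict f X permutes X"
proof -
  have "f ` X = X" using assms endo_inj_surj by blast
  then have "bij_betw f X X" using assms(3) by (simp add: bij_betw_def)
  then have "bij_betw (perm_restrict f X) X X"
    by (rule bij_betw_cong[THEN iffD1, rotated]) (simp add: perm_restrict_def)
  then show ?thesis by (auto simp: permutes_altdef perm_restrict_def)
qed

lemma restr_cyc:
  assumes "f ` X \<subseteq> X"
  shows "cyc X (perm_restrict f X) = cyc X f"
proof -
  have "(perm_restrict f X ^^ n) x = (f ^^ n) x \<and> (f ^^ n) x \<in> X" if "x \<in> X" for x n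
    using that assms by (induction n) (auto simp: perm_restrict_def)
  then have "cycle_of (perm_restrict f X) x = cycle_of f x" if "x \<in> X" for x
    using that unfolding cycle_of_def by auto
  then show ?thesis unfolding cyc_def by (metis image_cong)
qed

lemma restr_comp:
  assumes "g ` X \<subseteq> X"
  shows "perm_restrict (f \<circ> g) X = perm_restrict f X \<circ> perm_restrict g X"
  using assms by (auto simp: perm_restrict_def fun_eq_iff)

lemma parity_gen:
  assumes "finite X" "f ` X \<subseteq> X" "inj_on f X"
  shows "evenperm (perm_restrict f X) \<longleftrightarrow> even (card X - cyc X f)"
  using cyc_parity[OF restr_permutes[OF assms] assms(1)] restr_cyc[OF assms(2)] by simp

lemma parity_alt:
  assumes fin: "finite X" and f: "f ` X \<subseteq> X" "inj_on f X" and g: "g ` X \<subseteq> X" "inj_on g X"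
    and cg: "cyc X g = 1" and ev: "even (card X)"
  shows "even (card X - cyc X (f \<circ> g)) \<longleftrightarrow> \<not> even (card X - cyc X f)"
proof -
  have fg: "(f \<circ> g) ` X \<subseteq> X" "inj_on (f \<circ> g) X"
    using f g comp_inj_on[OF g(2) inj_on_subset[OF f(2) g(1)]] by (auto simp: image_subset_iff)
  have pf: "permutation (perm_restrict f X)" using restr_permutes[OF fin f] fin permutation_permutes by blast
  have pg: "permutation (perm_restrict g X)" using restr_permutes[OF fin g] fin permutation_permutes by blast
  have ne: "X \<noteq> {}" using cg by (auto simp: cyc_def)
  then have "card X > 0" using fin by auto
  then have "\<not> even (card X - 1)" using ev by presburger
  then have "\<not> evenperm (perm_restrict g X)" using parity_gen[OF fin g] cg by simp
  moreover have "evenperm (perm_restrict (f \<circ> g) X) = (evenperm (perm_restrict f X) = evenperm (perm_restrict g X))"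
    unfolding restr_comp[OF g(1)] by (rule evenperm_comp[OF pf pg])
  ultimately show ?thesis using parity_gen[OF fin f] parity_gen[OF fin fg] by blast
qed


lemma finite_X: "finite (ZmZ2 m)" by (simp add: ZmZ2_def)
lemma card_X: "card (ZmZ2 m) = 2 * m" by (simp add: ZmZ2_def card_cartesian_product)

lemma mod_back: "(a::nat) < N \<Longrightarrow> b < N \<Longrightarrow> (a + (b + N - a) mod N) mod N = b"
proof -
  assume a: "a < N" and b: "b < N"
  have "(a + (b + N - a) mod N) mod N = (a + (b + N - a)) mod N" by (simp add: mod_add_right_eq)
  also have "a + (b + N - a) = b + N" using a by simp
  finally show ?thesis using b by simp
qed

lemma c_cyc1: assumes m: "m \<ge> 1" shows "cyc (ZmZ2 m) (c_map m) = 1"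
proof -
  have "cycle_of (c_map m) z = ZmZ2 m" if z: "z \<in> ZmZ2 m" for z
  proof
    show "cycle_of (c_map m) z \<subseteq> ZmZ2 m" using cpow[OF m z] by (auto simp: cycle_of_def)
    show "ZmZ2 m \<subseteq> cycle_of (c_map m) z"
    proof
      fix w assume w: "w \<in> ZmZ2 m"
      define n where "n = (enc m w + 2 * m - enc m z) mod (2 * m)"
      have "enc m ((c_map m ^^ n) z) = enc m w"
        using cpow[OF m z, of n] mod_back[OF enc_lt[OF z] enc_lt[OF w]] by (simp add: n_def)
      then have "(c_map m ^^ n) z = w" using enc_inj cpow[OF m z, of n] w by metis
      then show "w \<in> cycle_of (c_map m) z" by (auto simp: cycle_of_def)
    qed
  qed
  moreover have "(0, 0) \<in> ZmZ2 m" using m by (simp add: mem_X)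
  ultimately have "cycle_of (c_map m) ` ZmZ2 m = {ZmZ2 m}" by auto
  then show ?thesis by (simp add: cyc_def)
qed

lemma bij2: "bij_betw (h::nat \<Rightarrow> nat) {0..<2::nat} {0..<2} \<Longrightarrow> y < 2 \<Longrightarrow> h (1 - y) = 1 - h y"
proof -
  assume b: "bij_betw h {0..<2::nat} {0..<2}" and y: "y < 2"
  have "h 0 < 2" "h 1 < 2" using bij_betw_apply[OF b, of 0] bij_betw_apply[OF b, of 1] by auto
  moreover have "h 0 \<noteq> h 1"
  proof
    assume "h 0 = h 1"
    then have "(0::nat) = 1" using inj_onD[OF bij_betw_imp_inj_on[OF b], of 0 1] by simp
    then show False by simp
  qed
  moreover have "y = 0 \<or> y = 1" using y by auto
  ultimately show ?thesis by auto
qed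

lemma sig_X:
  assumes bp: "bij_betw p {0..<m} {0..<m}" and bps: "\<And>x. x < m \<Longrightarrow> bij_betw (ps x) {0..<2} {0..<2}"
    and z: "z \<in> ZmZ2 m"
  shows "sigma_of p ps z \<in> ZmZ2 m"
proof -
  obtain x y where xy: "z = (x, y)" by (cases z)
  have a: "x < m" "y < 2" using z xy by (auto simp: mem_X)
  have "p x < m" using bp a by (auto dest: bij_betw_apply)
  moreover have "ps x y < 2" using bps[OF a(1)] a by (auto dest: bij_betw_apply)
  ultimately show ?thesis by (simp add: xy sigma_of_def mem_X)
qed

lemma sig_inj:
  assumes bp: "bij_betw p {0..<m} {0..<m}" and bps: "\<And>x. x < m \<Longrightarrow> bij_betw (ps x) {0..<2} {0..<2}"
  shows "inj_on (sigma_of p ps) (ZmZ2 m)"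
proof (rule inj_onI)
  fix z w assume z: "z \<in> ZmZ2 m" and w: "w \<in> ZmZ2 m" and e: "sigma_of p ps z = sigma_of p ps w"
  obtain x y where xy: "z = (x, y)" by (cases z)
  obtain x' y' where xy': "w = (x', y')" by (cases w)
  have a: "x < m" "y < 2" "x' < m" "y' < 2" using z w xy xy' by (auto simp: mem_X)
  have px: "p x = p x'" using e by (simp add: xy xy' sigma_of_def)
  have xx: "x = x'" using inj_onD[OF bij_betw_imp_inj_on[OF bp] px] a by simp
  have py: "ps x y = ps x y'" using e xx by (simp add: xy xy' sigma_of_def)
  have "y = y'" using inj_onD[OF bij_betw_imp_inj_on[OF bps[OF a(1)]] py] a by simp
  then show "z = w" using xx xy xy' by simp
qed

lemma sig_comm:
  assumes m: "m \<ge> 1" and bps: "\<And>x. x < m \<Longrightarrow> bij_betw (ps x) {0..<2} {0..<2}"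
    and bp: "bij_betw p {0..<m} {0..<m}" and z: "z \<in> ZmZ2 m"
  shows "sigma_of p ps ((c_map m ^^ m) z) = (c_map m ^^ m) (sigma_of p ps z)"
proof -
  obtain x y where xy: "z = (x, y)" by (cases z)
  have a: "x < m" "y < 2" using z xy by (auto simp: mem_X)
  have "(c_map m ^^ m) (sigma_of p ps z) = (p x, 1 - ps x y)"
    using cpow_m[OF m sig_X[OF bp bps z]] by (simp add: xy sigma_of_def)
  moreover have "sigma_of p ps ((c_map m ^^ m) z) = (p x, ps x (1 - y))"
    using cpow_m[OF m z] by (simp add: xy sigma_of_def)
  ultimately show ?thesis using bij2[OF bps[OF a(1)] a(2)] by simp
qed

lemma fixed_orbit: "f z = z \<Longrightarrow> cycle_of f z = {z}"
proof -
  assume f: "f z = z"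
  have "(f ^^ n) z = z" for n by (induction n) (simp_all add: f)
  then show ?thesis by (auto simp: cycle_of_def)
qed

lemma self_orbit: "x \<in> cycle_of f x"
  unfolding cycle_of_def by (metis (mono_tags, lifting) funpow_0 mem_Collect_eq)

lemma card_le_cyc:
  assumes "finite X" "S \<subseteq> X"
    and sep: "\<And>x y. x \<in> S \<Longrightarrow> y \<in> S \<Longrightarrow> x \<noteq> y \<Longrightarrow> y \<notin> cycle_of f x \<or> x \<notin> cycle_of f y"
  shows "card S \<le> cyc X f"
proof -
  have "inj_on (cycle_of f) S"
  proof (rule inj_onI)
    fix x y assume "x \<in> S" "y \<in> S" "cycle_of f x = cycle_of f y"
    then show "x = y" using sep self_orbit by metis
  qed
  then have "card S = card (cycle_of f ` S)" by (simp add: card_image)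
  also have "\<dots> \<le> card (cycle_of f ` X)" using assms by (intro card_mono) auto
  finally show ?thesis by (simp add: cyc_def)
qed



lemma parity_orbit:
  assumes X: "\<And>z. z \<in> ZmZ2 m \<Longrightarrow> g z \<in> ZmZ2 m \<and> enc m (g z) mod 2 = enc m z mod 2"
    and t: "t \<in> ZmZ2 m" and y: "y \<in> cycle_of g t"
  shows "enc m y mod 2 = enc m t mod 2"
proof -
  have "(g ^^ n) t \<in> ZmZ2 m \<and> enc m ((g ^^ n) t) mod 2 = enc m t mod 2" for n
    by (induction n) (use t X in auto)
  then show ?thesis using y by (auto simp: cycle_of_def)
qed

lemma par12: "(e::nat) < 2*m \<Longrightarrow> m \<ge> 3 \<Longrightarrow> (if e+1 < 2*m then e+1 else e+1-2*m) mod 2 \<noteq> (if e+2 < 2*m then e+2 else e+2-2*m) mod 2"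
proof (cases "e + 2 < 2*m")
  case True then show ?thesis by (simp) presburger
next
  case False
  assume "e < 2*m" "m \<ge> 3"
  then have "e = 2*m - 1 \<or> e = 2*m - 2" using False by linarith
  then show ?thesis using False \<open>m \<ge> 3\<close> by (elim disjE) (simp_all, presburger+)
qed
lemma dist4: "(e::nat) < 2*m \<Longrightarrow> m \<ge> 3 \<Longrightarrow> 
  e \<noteq> (if e + m < 2 * m then e + m else e + m - 2 * m) \<and>
  e \<noteq> (if e+1 < 2*m then e+1 else e+1-2*m) \<and> e \<noteq> (if e+2 < 2*m then e+2 else e+2-2*m) \<and>
  (if e + m < 2 * m then e + m else e + m - 2 * m) \<noteq> (if e+1 < 2*m then e+1 else e+1-2*m) \<and>
  (if e + m < 2 * m then e + m else e + m - 2 * m) \<noteq> (if e+2 < 2*m then e+2 else e+2-2*m) \<and>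
  (if e+1 < 2*m then e+1 else e+1-2*m) \<noteq> (if e+2 < 2*m then e+2 else e+2-2*m)"
  by (simp split: if_split; arith)

lemma ge4: "3 \<le> (a::nat) \<Longrightarrow> even (2*m - a) \<Longrightarrow> a \<le> 2*m \<Longrightarrow> 4 \<le> a"
  by presburger

lemma modeq2: "(a::nat) mod 2 = b mod 2 \<longleftrightarrow> (even a \<longleftrightarrow> even b)"
  by (metis even_iff_mod_2_eq_zero odd_iff_mod_2_eq_one)
lemma par_arith: assumes "(even (K::nat) \<longleftrightarrow> even k)" "K mod 2 = (U + 2*m - B) mod 2" "U mod 2 = (Y + k) mod 2" "B < 2*m"
  shows "B mod 2 = Y mod 2"
proof -
  have d: "even (U + 2*m - B) \<longleftrightarrow> (even U \<longleftrightarrow> even B)" using assms(4) by (simp add: even_diff_nat)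
  have "even K \<longleftrightarrow> even (U + 2*m - B)" using assms(2) modeq2 by blast
  moreover have "even U \<longleftrightarrow> (even Y \<longleftrightarrow> even k)" using assms(3) modeq2 by simp
  ultimately show ?thesis using d assms(1) modeq2 by blast
qed

theorem propositionB3:
  fixes m :: nat and p :: "nat \<Rightarrow> nat" and ps :: "nat \<Rightarrow> nat \<Rightarrow> nat"
  assumes "m \<ge> 3"
    and "bij_betw p {0..<m} {0..<m}"
    and "\<And>x. x < m \<Longrightarrow> bij_betw (ps x) {0..<2} {0..<2}"
  shows "\<exists>k::nat. cyc (ZmZ2 m) (sigma_of p ps \<circ> (c_map m ^^ k)) \<ge> 4"
proof -
  note m3 = assms(1) and bp = assms(2) and bps = assms(3)
  have m1: "m \<ge> 1" using m3 by simp
  define X where "X = ZmZ2 m"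
  define s where "s = sigma_of p ps"
  define c where "c = c_map m"
  have finX: "finite X" by (simp add: X_def finite_X)
  have cardX: "card X = 2 * m" by (simp add: X_def card_X)
  have sX: "\<And>z. z \<in> X \<Longrightarrow> s z \<in> X" using sig_X[OF bp bps] by (simp add: X_def s_def)
  have sinj: "inj_on s X" using sig_inj[OF bp bps] by (simp add: X_def s_def)
  have cX: "\<And>z. z \<in> X \<Longrightarrow> c z \<in> X" using c_X[OF m1] by (simp add: X_def c_def)
  have cinj: "inj_on c X"
  proof (rule inj_onI)
    fix z w assume z: "z \<in> X" and w: "w \<in> X" and e: "c z = c w"
    have "(enc m z + 1) mod (2 * m) = (enc m w + 1) mod (2 * m)"
      using c_enc[OF m1] z w e by (metis X_def c_def)
    moreover have "enc m z < 2 * m" "enc m w < 2 * m" using enc_lt z w by (auto simp: X_def)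
    ultimately have "enc m z = enc m w" using mod_cases2[of "enc m z" "2*m" 1] mod_cases2[of "enc m w" "2*m" 1]
      by (auto split: if_splits)
    then show "z = w" using enc_inj z w by (auto simp: X_def)
  qed
  have cpX: "\<And>z k. z \<in> X \<Longrightarrow> (c ^^ k) z \<in> X \<and> enc m ((c ^^ k) z) = (enc m z + k) mod (2 * m)"
    using cpow[OF m1] by (simp add: X_def c_def)
  have c1: "cyc X c = 1" using c_cyc1[OF m1] by (simp add: X_def c_def)
  define g where "g k = s \<circ> (c ^^ k)" for k
  have gX: "(g k) ` X \<subseteq> X" for k
  proof
    fix y assume "y \<in> g k ` X"
    then obtain x where x: "x \<in> X" and yx: "y = g k x" by auto
    have "(c ^^ k) x \<in> X" using cpX[OF x, of k] by simp
    then show "y \<in> X" using sX yx by (simp add: g_def)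
  qed
  have cpinj: "inj_on (c ^^ k) X" for k
  proof (induction k)
    case 0 then show ?case by simp
  next
    case (Suc k)
    have "(c ^^ k) ` X \<subseteq> X" using cpX by auto
    then have "inj_on (c \<circ> (c ^^ k)) X" using comp_inj_on[OF Suc.IH inj_on_subset[OF cinj]] by simp
    then show ?case by (simp only: funpow.simps(2))
  qed
  have ginj: "inj_on (g k) X" for k
  proof -
    have "(c ^^ k) ` X \<subseteq> X" using cpX by auto
    then show ?thesis unfolding g_def using comp_inj_on[OF cpinj inj_on_subset[OF sinj]] by simp
  qed
  have par: "even (2 * m - cyc X (g k)) \<longleftrightarrow> (even k \<longleftrightarrow> even (2 * m - cyc X s))" for k
  proof (induction k)
    case 0 then show ?case by (simp add: g_def)
  next
    case (Suc k)
    have e: "g (Suc k) = g k \<circ> c" by (simp only: g_def funpow_Suc_right o_assoc)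
    have "even (card X - cyc X (g k \<circ> c)) \<longleftrightarrow> \<not> even (card X - cyc X (g k))"
      by (rule parity_alt[OF finX gX ginj _ cinj c1]) (use cX cardX in auto)
    then have h: "even (2 * m - cyc X (g (Suc k))) \<longleftrightarrow> \<not> even (2 * m - cyc X (g k))"
      by (simp only: e cardX)
    have "even (Suc k) \<longleftrightarrow> \<not> even k" by simp
    then show ?case using Suc.IH h by blast
  qed
  have cyc_le: "cyc X (g k) \<le> 2 * m" for k using cyc_le_card[OF finX] cardX by metis
  define kw where "kw w = (enc m w + 2 * m - enc m (s w)) mod (2 * m)" for w
  have kwfix: "(c ^^ kw w) (s w) = w" if w: "w \<in> X" for w
  proof -
    have sw: "s w \<in> X" using sX w by simp
    have "enc m ((c ^^ kw w) (s w)) = enc m w"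
      using cpX[OF sw, of "kw w"] mod_back[of "enc m (s w)" "2*m" "enc m w"] enc_lt sw w
      by (simp add: kw_def X_def)
    then show ?thesis using enc_inj cpX[OF sw] w by (metis X_def)
  qed
  have gfix: "g (kw w) (s w) = s w" if "w \<in> X" for w using kwfix[OF that] by (simp add: g_def)
  have hfix: "g k ((c ^^ m) z) = (c ^^ m) z" if z: "z \<in> X" and fz: "g k z = z" for k z
  proof -
    have "(c ^^ k) ((c ^^ m) z) = (c ^^ m) ((c ^^ k) z)"
      by (metis add.commute comp_apply funpow_add)
    moreover have "s ((c ^^ m) ((c ^^ k) z)) = (c ^^ m) (s ((c ^^ k) z))"
      using sig_comm[OF m1 bps bp] cpX[OF z, of k] by (simp add: X_def s_def c_def)
    ultimately show ?thesis using fz by (simp add: g_def)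
  qed
  have pts: "z \<noteq> (c ^^ m) z \<and> z \<noteq> (c ^^ 1) z \<and> z \<noteq> (c ^^ 2) z \<and> (c ^^ m) z \<noteq> (c ^^ 1) z
     \<and> (c ^^ m) z \<noteq> (c ^^ 2) z \<and> (c ^^ 1) z \<noteq> (c ^^ 2) z
     \<and> enc m ((c ^^ 1) z) mod 2 \<noteq> enc m ((c ^^ 2) z) mod 2" if z: "z \<in> X" for z
  proof -
    define e where "e = enc m z"
    have el: "e < 2 * m" using enc_lt z by (simp add: e_def X_def)
    have E: "enc m ((c ^^ j) z) = (e + j) mod (2 * m)" for j using cpX[OF z] by (simp add: e_def)
    have E0: "enc m z = e" by (simp add: e_def)
    have Em: "enc m ((c ^^ m) z) = (if e + m < 2 * m then e + m else e + m - 2 * m)"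
      using E[of m] mod_cases2[OF el, of m] by simp
    have E1: "enc m ((c ^^ 1) z) = (if e + 1 < 2 * m then e + 1 else e + 1 - 2 * m)"
      using E[of 1] mod_cases2[OF el, of 1] m1 by simp
    have E2: "enc m ((c ^^ 2) z) = (if e + 2 < 2 * m then e + 2 else e + 2 - 2 * m)"
      using E[of 2] mod_cases2[OF el, of 2] m1 by simp
    have "enc m z \<noteq> enc m ((c ^^ m) z) \<and> enc m z \<noteq> enc m ((c ^^ 1) z) \<and> enc m z \<noteq> enc m ((c ^^ 2) z)
      \<and> enc m ((c ^^ m) z) \<noteq> enc m ((c ^^ 1) z) \<and> enc m ((c ^^ m) z) \<noteq> enc m ((c ^^ 2) z)
      \<and> enc m ((c ^^ 1) z) \<noteq> enc m ((c ^^ 2) z)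
      \<and> enc m ((c ^^ 1) z) mod 2 \<noteq> enc m ((c ^^ 2) z) mod 2"
      unfolding E0 Em E1 E2 using dist4[OF el m3] par12[OF el m3] by blast
    then show ?thesis by metis
  qed
  show ?thesis
  proof (cases "\<exists>w\<in>X. (even (kw w) \<longleftrightarrow> even (2 * m - cyc X s))")
    case True
    then obtain w where w: "w \<in> X" and ew: "even (kw w) \<longleftrightarrow> even (2 * m - cyc X s)" by blast
    define k where "k = kw w"
    define z where "z = s w"
    have zX: "z \<in> X" using sX w by (simp add: z_def)
    have f1: "g k z = z" using gfix[OF w] by (simp add: k_def z_def)
    have f2: "g k ((c ^^ m) z) = (c ^^ m) z" using hfix[OF zX f1] .
    note P = pts[OF zX]
    have "card {z, (c ^^ m) z, (c ^^ 1) z} \<le> cyc X (g k)"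
    proof (rule card_le_cyc[OF finX])
      show "{z, (c ^^ m) z, (c ^^ 1) z} \<subseteq> X" using zX cpX[OF zX, of m] cpX[OF zX, of 1] by blast
    next
      fix x y assume "x \<in> {z, (c ^^ m) z, (c ^^ 1) z}" "y \<in> {z, (c ^^ m) z, (c ^^ 1) z}" "x \<noteq> y"
      then show "y \<notin> cycle_of (g k) x \<or> x \<notin> cycle_of (g k) y"
        using fixed_orbit[of "g k" z, OF f1] fixed_orbit[of "g k" "(c ^^ m) z", OF f2] P by auto
    qed
    moreover have "card {z, (c ^^ m) z, (c ^^ 1) z} = 3" using P by auto
    moreover have "even (2 * m - cyc X (g k))" using par[of k] ew by (simp add: k_def)
    ultimately have "cyc X (g k) \<ge> 4" using cyc_le[of k] ge4 by simp
    then show ?thesis by (auto simp: X_def g_def s_def c_def)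
  next
    case False
    define w0 where "w0 = ((0::nat), (0::nat))"
    have w0X: "w0 \<in> X" using m1 by (simp add: X_def w0_def mem_X)
    define k where "k = kw w0"
    have allk: "even (kw u) \<longleftrightarrow> even k" if "u \<in> X" for u
      using False that w0X by (auto simp: k_def)
    define z where "z = s w0"
    have zX: "z \<in> X" using sX w0X by (simp add: z_def)
    have f1: "g k z = z" using gfix[OF w0X] by (simp add: k_def z_def)
    have f2: "g k ((c ^^ m) z) = (c ^^ m) z" using hfix[OF zX f1] .
    note P = pts[OF zX]
    have inv: "g k y \<in> ZmZ2 m \<and> enc m (g k y) mod 2 = enc m y mod 2" if y: "y \<in> ZmZ2 m" for y
    proof -
      have yX: "y \<in> X" using y by (simp add: X_def)
      define u where "u = (c ^^ k) y"
      have uX: "u \<in> X" and Eu: "enc m u = (enc m y + k) mod (2 * m)" using cpX[OF yX, of k] by (auto simp: u_def)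
      have suX: "s u \<in> X" using sX uX by simp
      have bl: "enc m (s u) < 2 * m" using enc_lt suX by (simp add: X_def)
      have ku: "even (kw u) \<longleftrightarrow> even k" using allk[OF uX] .
      have kwu: "kw u mod 2 = (enc m u + 2 * m - enc m (s u)) mod 2" by (simp add: kw_def mod2m)
      have Eu2: "enc m u mod 2 = (enc m y + k) mod 2" using Eu by (simp add: mod2m)
      have "enc m (s u) mod 2 = enc m y mod 2"
        by (rule par_arith[OF ku kwu Eu2 bl])
      moreover have "g k y = s u" by (simp add: g_def u_def)
      ultimately show ?thesis using suX by (simp add: X_def)
    qed
    have t1X: "(c ^^ 1) z \<in> X" and t2X: "(c ^^ 2) z \<in> X" using cpX[OF zX, of 1] cpX[OF zX, of 2] by blast+
    have hX: "(c ^^ m) z \<in> X" using cpX[OF zX, of m] by blast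
    have sep: "y \<notin> cycle_of (g k) x \<or> x \<notin> cycle_of (g k) y"
      if "x \<in> {z, (c ^^ m) z, (c ^^ 1) z, (c ^^ 2) z}" "y \<in> {z, (c ^^ m) z, (c ^^ 1) z, (c ^^ 2) z}" "x \<noteq> y" for x y
    proof -
      have o12: "(c ^^ 2) z \<notin> cycle_of (g k) ((c ^^ 1) z)"
        using parity_orbit[OF inv, of "(c ^^ 1) z" "(c ^^ 2) z"] t1X P by (auto simp: X_def)
      show ?thesis
        using that o12 fixed_orbit[of "g k" z, OF f1] fixed_orbit[of "g k" "(c ^^ m) z", OF f2] P by auto
    qed
    have "card {z, (c ^^ m) z, (c ^^ 1) z, (c ^^ 2) z} \<le> cyc X (g k)"
      by (rule card_le_cyc[OF finX _ sep]) (use zX t1X t2X hX in blast)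
    moreover have "card {z, (c ^^ m) z, (c ^^ 1) z, (c ^^ 2) z} = 4" using P by auto
    ultimately have "cyc X (g k) \<ge> 4" by simp
    then show ?thesis by (auto simp: X_def g_def s_def c_def)
  qed
qed

end
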